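(* Let $I$ be an ideal of a multiplicative Lie algebra $G$. Then $\dfrac{G}{I}\otimes\dfrac{G}{I}\cong\dfrac{G\otimes G}{(I\otimes G)(G\otimes I)}$.
   Context: A multiplicative Lie algebra is a group $(G,\cdot)$ with a binary operation $\star$ such that for all $x,y,z\in G$: $x\star x=1$; $x\star(yz)=(x\star y)\,{}^y(x\star z)$; $(xy)\star z={}^x(y\star z)(x\star z)$; $((x\star y)\star{}^yz)((y\star z)\star{}^zx)((z\star x)\star{}^xy)=1$; ${}^z(x\star y)={}^zx\star{}^zy$, where ${}^xy=xyx^{-1}$. An ideal is a normal subgroup $I$ with $x\star y\in I$ for all $x\in G,y\in I$. The tensor square $G\otimes G$ is the multiplicative Lie algebra generated by symbols $x\otimes y$ ($x,y\in G$) subject to, for all $x,x',y,y'\in G$: $x\otimes(yy')=(x\otimes y)({}^yx\otimes{}^yy')$; $(xx')\otimes y=({}^xx'\otimes{}^xy)(x\otimes y)$; $((x\star x')\otimes{}^{x'}y)({}^yx\otimes(x'\star y))^{-1}({}^xx'\otimes(x\star y)^{-1})^{-1}=1$; $({}^{y'}x\otimes(y\star y'))((y\star x)^{-1}\otimes{}^yy')^{-1}((y'\star x)\otimes{}^xy)^{-1}=1$; and $(x\otimes y)\star(x'\otimes y')=(y\star x)^{-1}\otimes(x'\star y')$. $I\otimes G$ (resp. $G\otimes I$) is the subgroup of $G\otimes G$ generated by all $a\otimes b$ with $a\in I,b\in G$ (resp. $a\in G,b\in I$). *)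

theory Defs
  imports "HOL-Algebra.Algebra"
begin

record 'a mla = "'a monoid" + star :: "'a \<Rightarrow> 'a \<Rightarrow> 'a"

definition conjg :: "('a, 'b) mla_scheme \<Rightarrow> 'a \<Rightarrow> 'a \<Rightarrow> 'a" where
  "conjg G x y = x \<otimes>\<^bsub>G\<^esub> y \<otimes>\<^bsub>G\<^esub> inv\<^bsub>G\<^esub> x"

definition mult_lie_alg :: "('a, 'b) mla_scheme \<Rightarrow> bool" where
  "mult_lie_alg G \<longleftrightarrow> group G
   \<and> (\<forall>x\<in>carrier G. \<forall>y\<in>carrier G. star G x y \<in> carrier G)
   \<and> (\<forall>x\<in>carrier G. star G x x = \<one>\<^bsub>G\<^esub>)
   \<and> (\<forall>x\<in>carrier G. \<forall>y\<in>carrier G. \<forall>z\<in>carrier G.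
        star G x (y \<otimes>\<^bsub>G\<^esub> z) = star G x y \<otimes>\<^bsub>G\<^esub> conjg G y (star G x z))
   \<and> (\<forall>x\<in>carrier G. \<forall>y\<in>carrier G. \<forall>z\<in>carrier G.
        star G (x \<otimes>\<^bsub>G\<^esub> y) z = conjg G x (star G y z) \<otimes>\<^bsub>G\<^esub> star G x z)
   \<and> (\<forall>x\<in>carrier G. \<forall>y\<in>carrier G. \<forall>z\<in>carrier G.
        star G (star G x y) (conjg G y z) \<otimes>\<^bsub>G\<^esub> star G (star G y z) (conjg G z x)
          \<otimes>\<^bsub>G\<^esub> star G (star G z x) (conjg G x y) = \<one>\<^bsub>G\<^esub>)
   \<and> (\<forall>x\<in>carrier G. \<forall>y\<in>carrier G. \<forall>z\<in>carrier G.
        conjg G z (star G x y) = star G (conjg G z x) (conjg G z y))"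

definition mla_ideal :: "'a set \<Rightarrow> ('a, 'b) mla_scheme \<Rightarrow> bool" where
  "mla_ideal I G \<longleftrightarrow> normal I G \<and> (\<forall>x\<in>carrier G. \<forall>y\<in>I. star G x y \<in> I)"

definition mla_hom :: "('a, 'c) mla_scheme \<Rightarrow> ('b, 'd) mla_scheme \<Rightarrow> ('a \<Rightarrow> 'b) set" where
  "mla_hom G H = {h. h \<in> hom G H \<and>
     (\<forall>x\<in>carrier G. \<forall>y\<in>carrier G. h (star G x y) = star H (h x) (h y))}"

definition mla_iso :: "('a, 'c) mla_scheme \<Rightarrow> ('b, 'd) mla_scheme \<Rightarrow> ('a \<Rightarrow> 'b) set" where
  "mla_iso G H = {h. h \<in> mla_hom G H \<and> bij_betw h (carrier G) (carrier H)}"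

definition mla_is_iso :: "('a, 'c) mla_scheme \<Rightarrow> ('b, 'd) mla_scheme \<Rightarrow> bool" where
  "mla_is_iso G H \<longleftrightarrow> mla_iso G H \<noteq> {}"

text \<open>Quotient G/I by an ideal: the quotient group (right cosets, as in HOL-Algebra's
  G Mod I) with star induced from representatives (well defined for ideals).\<close>

definition MLA_Mod :: "('a, 'b) mla_scheme \<Rightarrow> 'a set \<Rightarrow> 'a set mla" where
  "MLA_Mod G I = \<lparr> partial_object.carrier = rcosets\<^bsub>G\<^esub> I, monoid.mult = set_mult G, monoid.one = I,
     star = (\<lambda>A B. I #>\<^bsub>G\<^esub> star G (SOME a. a \<in> A) (SOME b. b \<in> B)) \<rparr>"

datatype 'g mterm = Gen 'g | One | Mul "'g mterm" "'g mterm" | Inv "'g mterm"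
  | Star "'g mterm" "'g mterm"

definition cjT :: "'g mterm \<Rightarrow> 'g mterm \<Rightarrow> 'g mterm" where
  "cjT x y = Mul (Mul x y) (Inv x)"

fun wf_mterm :: "'a set \<Rightarrow> ('a \<times> 'a) mterm \<Rightarrow> bool" where
  "wf_mterm A (Gen (x, y)) = (x \<in> A \<and> y \<in> A)"
| "wf_mterm A One = True"
| "wf_mterm A (Mul s t) = (wf_mterm A s \<and> wf_mterm A t)"
| "wf_mterm A (Inv s) = wf_mterm A s"
| "wf_mterm A (Star s t) = (wf_mterm A s \<and> wf_mterm A t)"

inductive_set tens_rel :: "('a, 'b) mla_scheme \<Rightarrow> (('a \<times> 'a) mterm \<times> ('a \<times> 'a) mterm) set"
  for G :: "('a, 'b) mla_scheme" where
  refl: "(s, s) \<in> tens_rel G"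
| sym: "(s, t) \<in> tens_rel G \<Longrightarrow> (t, s) \<in> tens_rel G"
| trans: "(s, t) \<in> tens_rel G \<Longrightarrow> (t, u) \<in> tens_rel G \<Longrightarrow> (s, u) \<in> tens_rel G"
| cong_mul: "(s, s') \<in> tens_rel G \<Longrightarrow> (t, t') \<in> tens_rel G \<Longrightarrow> (Mul s t, Mul s' t') \<in> tens_rel G"
| cong_inv: "(s, s') \<in> tens_rel G \<Longrightarrow> (Inv s, Inv s') \<in> tens_rel G"
| cong_star: "(s, s') \<in> tens_rel G \<Longrightarrow> (t, t') \<in> tens_rel G \<Longrightarrow> (Star s t, Star s' t') \<in> tens_rel G"
| assoc: "(Mul (Mul s t) u, Mul s (Mul t u)) \<in> tens_rel G"
| lunit: "(Mul One s, s) \<in> tens_rel G"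
| runit: "(Mul s One, s) \<in> tens_rel G"
| linv: "(Mul (Inv s) s, One) \<in> tens_rel G"
| star_self: "(Star s s, One) \<in> tens_rel G"
| star_mul_right: "(Star x (Mul y z), Mul (Star x y) (cjT y (Star x z))) \<in> tens_rel G"
| star_mul_left: "(Star (Mul x y) z, Mul (cjT x (Star y z)) (Star x z)) \<in> tens_rel G"
| jacobi: "(Mul (Mul (Star (Star x y) (cjT y z)) (Star (Star y z) (cjT z x)))
             (Star (Star z x) (cjT x y)), One) \<in> tens_rel G"
| star_conj: "(cjT z (Star x y), Star (cjT z x) (cjT z y)) \<in> tens_rel G"
| rel1: "\<lbrakk>x \<in> carrier G; y \<in> carrier G; y' \<in> carrier G\<rbrakk> \<Longrightarrow>
    (Gen (x, y \<otimes>\<^bsub>G\<^esub> y'), Mul (Gen (x, y)) (Gen (conjg G y x, conjg G y y'))) \<in> tens_rel G"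
| rel2: "\<lbrakk>x \<in> carrier G; x' \<in> carrier G; y \<in> carrier G\<rbrakk> \<Longrightarrow>
    (Gen (x \<otimes>\<^bsub>G\<^esub> x', y), Mul (Gen (conjg G x x', conjg G x y)) (Gen (x, y))) \<in> tens_rel G"
| rel3: "\<lbrakk>x \<in> carrier G; x' \<in> carrier G; y \<in> carrier G\<rbrakk> \<Longrightarrow>
    (Mul (Mul (Gen (star G x x', conjg G x' y)) (Inv (Gen (conjg G y x, star G x' y))))
         (Inv (Gen (conjg G x x', inv\<^bsub>G\<^esub> (star G x y)))), One) \<in> tens_rel G"
| rel4: "\<lbrakk>x \<in> carrier G; y \<in> carrier G; y' \<in> carrier G\<rbrakk> \<Longrightarrow>
    (Mul (Mul (Gen (conjg G y' x, star G y y')) (Inv (Gen (inv\<^bsub>G\<^esub> (star G y x), conjg G y y'))))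
         (Inv (Gen (star G y' x, conjg G x y))), One) \<in> tens_rel G"
| rel5: "\<lbrakk>x \<in> carrier G; y \<in> carrier G; x' \<in> carrier G; y' \<in> carrier G\<rbrakk> \<Longrightarrow>
    (Star (Gen (x, y)) (Gen (x', y')), Gen (inv\<^bsub>G\<^esub> (star G y x), star G x' y')) \<in> tens_rel G"

definition tensor_sq :: "('a, 'b) mla_scheme \<Rightarrow> ('a \<times> 'a) mterm set mla" where
  "tensor_sq G = \<lparr> partial_object.carrier = {tens_rel G `` {t} | t. wf_mterm (carrier G) t},
     monoid.mult = (\<lambda>P Q. \<Union>s\<in>P. \<Union>t\<in>Q. (tens_rel G `` {Mul s t})),
     monoid.one = tens_rel G `` {One},
     star = (\<lambda>P Q. \<Union>s\<in>P. \<Union>t\<in>Q. (tens_rel G `` {Star s t})) \<rparr>"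

definition tens :: "('a, 'b) mla_scheme \<Rightarrow> 'a \<Rightarrow> 'a \<Rightarrow> ('a \<times> 'a) mterm set" where
  "tens G x y = tens_rel G `` {Gen (x, y)}"

definition left_tens :: "'a set \<Rightarrow> ('a, 'b) mla_scheme \<Rightarrow> ('a \<times> 'a) mterm set set" where
  "left_tens I G = generate (tensor_sq G) {tens G a b | a b. a \<in> I \<and> b \<in> carrier G}"

definition right_tens :: "('a, 'b) mla_scheme \<Rightarrow> 'a set \<Rightarrow> ('a \<times> 'a) mterm set set" where
  "right_tens G I = generate (tensor_sq G) {tens G a b | a b. a \<in> carrier G \<and> b \<in> I}"

end

theory Submission
  imports Defs
begin

lemma (in group) inv_cancel_left: "x \<in> carrier G \<Longrightarrow> y \<in> carrier G \<Longrightarrow> inv x \<otimes> (x \<otimes> y) = y"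
  by (simp add: m_assoc[symmetric])
lemma (in group) inv_cancel_left2: "x \<in> carrier G \<Longrightarrow> y \<in> carrier G \<Longrightarrow> x \<otimes> (inv x \<otimes> y) = y"
  by (simp add: m_assoc[symmetric])

locale mla = group G for G :: "('a, 'b) mla_scheme" (structure) +
  assumes star_closed [simp, intro]: "\<lbrakk>x \<in> carrier G; y \<in> carrier G\<rbrakk> \<Longrightarrow> star G x y \<in> carrier G"
  and star_self: "x \<in> carrier G \<Longrightarrow> star G x x = \<one>"
  and star_mul_r: "\<lbrakk>x \<in> carrier G; y \<in> carrier G; z \<in> carrier G\<rbrakk> \<Longrightarrow>
        star G x (y \<otimes> z) = star G x y \<otimes> conjg G y (star G x z)"
  and star_mul_l: "\<lbrakk>x \<in> carrier G; y \<in> carrier G; z \<in> carrier G\<rbrakk> \<Longrightarrow>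
        star G (x \<otimes> y) z = conjg G x (star G y z) \<otimes> star G x z"

lemma mult_lie_alg_mla: "mult_lie_alg G \<Longrightarrow> mla G"
  unfolding mult_lie_alg_def mla_def mla_axioms_def by blast

lemma (in group) prod_one_r: "x \<otimes> y = \<one> \<Longrightarrow> x \<in> carrier G \<Longrightarrow> y \<in> carrier G \<Longrightarrow> y = inv x"
  by (metis inv_equality inv_comm)
lemma (in group) prod_one_l: "x \<otimes> y = \<one> \<Longrightarrow> x \<in> carrier G \<Longrightarrow> y \<in> carrier G \<Longrightarrow> x = inv y"
  by (metis inv_equality)
lemma (in group) idem_one: "a \<in> carrier G \<Longrightarrow> a = a \<otimes> a \<Longrightarrow> a = \<one>"
  by (metis l_cancel_one')

context mla begin

lemma conjg_closed [simp, intro]: "x \<in> carrier G \<Longrightarrow> y \<in> carrier G \<Longrightarrow> conjg G x y \<in> carrier G"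
  by (simp add: conjg_def)
lemma conjg_one_r [simp]: "x \<in> carrier G \<Longrightarrow> conjg G x \<one> = \<one>"
  by (simp add: conjg_def)
lemma conjg_one_l [simp]: "x \<in> carrier G \<Longrightarrow> conjg G \<one> x = x"
  by (simp add: conjg_def)
lemma conjg_mult: "\<lbrakk>x \<in> carrier G; a \<in> carrier G; b \<in> carrier G\<rbrakk> \<Longrightarrow>
   conjg G x a \<otimes> conjg G x b = conjg G x (a \<otimes> b)"
  by (simp add: conjg_def m_assoc inv_cancel_left)
lemma conjg_comp: "\<lbrakk>x \<in> carrier G; y \<in> carrier G; a \<in> carrier G\<rbrakk> \<Longrightarrow>
   conjg G x (conjg G y a) = conjg G (x \<otimes> y) a"
  by (simp add: conjg_def m_assoc inv_mult_group)
lemma conjg_inv: "\<lbrakk>x \<in> carrier G; a \<in> carrier G\<rbrakk> \<Longrightarrow>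
   conjg G x (inv a) = inv (conjg G x a)"
  by (simp add: conjg_def m_assoc inv_mult_group)
lemma conjg_conjg_inv [simp]: "\<lbrakk>x \<in> carrier G; a \<in> carrier G\<rbrakk> \<Longrightarrow>
   conjg G (inv x) (conjg G x a) = a"
  by (simp add: conjg_comp)
lemma conjg_inv_conjg [simp]: "\<lbrakk>x \<in> carrier G; a \<in> carrier G\<rbrakk> \<Longrightarrow>
   conjg G x (conjg G (inv x) a) = a"
  by (simp add: conjg_comp)
lemma conjg_conjg: assumes "x \<in> carrier G" "y \<in> carrier G" "a \<in> carrier G"
  shows "conjg G (conjg G x y) (conjg G x a) = conjg G (x \<otimes> y) a"
proof -
  have "conjg G (conjg G x y) (conjg G x a) = conjg G x y \<otimes> conjg G x a \<otimes> inv (conjg G x y)"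
    by (simp add: conjg_def)
  also have "\<dots> = conjg G x y \<otimes> conjg G x a \<otimes> conjg G x (inv y)"
    using assms by (simp add: conjg_inv)
  also have "\<dots> = conjg G x (y \<otimes> a \<otimes> inv y)"
    using assms by (simp add: conjg_mult)
  also have "\<dots> = conjg G (x \<otimes> y) a"
    using assms by (simp add: conjg_comp[symmetric]) (simp add: conjg_def)
  finally show ?thesis .
qed
lemma conjg_eq_one: assumes "x \<in> carrier G" "a \<in> carrier G" shows "conjg G x a = \<one> \<longleftrightarrow> a = \<one>"
proof
  assume "conjg G x a = \<one>"
  hence "conjg G (inv x) (conjg G x a) = \<one>" using assms by simp
  thus "a = \<one>" using assms by simp
qed (use assms in simp)
lemma normal_conjg: "N \<lhd> G \<Longrightarrow> x \<in> carrier G \<Longrightarrow> n \<in> N \<Longrightarrow> conjg G x n \<in> N"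
  by (simp add: conjg_def normal_inv_iff)

lemma star_one_l [simp]: "x \<in> carrier G \<Longrightarrow> star G \<one> x = \<one>"
  using star_mul_l[of \<one> \<one> x] by (intro idem_one) auto

lemma star_one_r [simp]: "x \<in> carrier G \<Longrightarrow> star G x \<one> = \<one>"
  using star_mul_r[of x \<one> \<one>] by (intro idem_one) auto

lemma star_inv_l: assumes "x \<in> carrier G" "y \<in> carrier G"
  shows "star G (inv x) y = inv (conjg G (inv x) (star G x y))"
proof -
  have "\<one> = conjg G (inv x) (star G x y) \<otimes> star G (inv x) y"
    using star_mul_l[of "inv x" x y] assms by simp
  thus ?thesis using assms by (intro prod_one_r) auto
qed

lemma star_inv_r: assumes "x \<in> carrier G" "y \<in> carrier G"
  shows "star G x (inv y) = conjg G (inv y) (inv (star G x y))"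
proof -
  have "\<one> = star G x y \<otimes> conjg G y (star G x (inv y))"
    using star_mul_r[of x y "inv y"] assms by simp
  hence "conjg G y (star G x (inv y)) = inv (star G x y)"
    using assms by (intro prod_one_r) auto
  hence "conjg G (inv y) (conjg G y (star G x (inv y))) = conjg G (inv y) (inv (star G x y))" by simp
  thus ?thesis using assms by simp
qed

lemma star_swap: assumes "x \<in> carrier G" "y \<in> carrier G"
  shows "star G y x = inv (star G x y)"
proof -
  have a: "star G y (x \<otimes> y) = star G y x"
    using star_mul_r[of y x y] assms by (simp add: star_self)
  have b: "star G x (x \<otimes> y) = conjg G x (star G x y)"
    using star_mul_r[of x x y] assms by (simp add: star_self)
  have "\<one> = conjg G x (star G y x) \<otimes> conjg G x (star G x y)"
    using star_mul_l[of x y "x \<otimes> y"] assms a b by (simp add: star_self)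
  hence "conjg G x (star G y x \<otimes> star G x y) = \<one>" using assms by (simp add: conjg_mult)
  hence "star G y x \<otimes> star G x y = \<one>" using assms by (simp add: conjg_eq_one)
  thus ?thesis using assms by (intro prod_one_l) auto
qed


lemma ideal_normal: "mla_ideal N G \<Longrightarrow> N \<lhd> G"
  by (simp add: mla_ideal_def)
lemma ideal_sub: "mla_ideal N G \<Longrightarrow> subgroup N G"
  unfolding mla_ideal_def using normal_imp_subgroup by blast
lemma ideal_star_r: "mla_ideal N G \<Longrightarrow> b \<in> carrier G \<Longrightarrow> n \<in> N \<Longrightarrow> star G b n \<in> N"
  by (simp add: mla_ideal_def)
lemma ideal_star_l: assumes "mla_ideal N G" "b \<in> carrier G" "n \<in> N" shows "star G n b \<in> N"
proof -
  have n: "n \<in> carrier G" using subgroup.mem_carrier[OF ideal_sub[OF assms(1)] assms(3)] .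
  have "star G n b = inv (star G b n)" using star_swap[OF assms(2) n] .
  thus ?thesis using ideal_star_r[OF assms(1,2,3)] subgroup.m_inv_closed[OF ideal_sub[OF assms(1)]] by simp
qed

end

lemma (in group) coset_eq_iff: assumes "subgroup N G" "x \<in> carrier G" "y \<in> carrier G"
  shows "(N #> x = N #> y) \<longleftrightarrow> x \<otimes> inv y \<in> N"
proof
  assume "N #> x = N #> y"
  hence "x \<in> N #> y" using rcos_self[OF assms(2,1)] by simp
  thus "x \<otimes> inv y \<in> N" using subgroup.rcos_module_imp[OF assms(1) is_group assms(3)] by blast
next
  assume "x \<otimes> inv y \<in> N"
  hence "x \<in> N #> y" using subgroup.rcos_module_rev[OF assms(1) is_group assms(3,2)] by blast
  thus "N #> x = N #> y" using repr_independence[OF _ assms(3,1)] by simp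
qed

lemma (in group) coset_obtain: assumes "x' \<in> N #> x"
  obtains n where "n \<in> N" "x' = n \<otimes> x"
  using assms unfolding r_coset_def by blast

lemma (in group) coset_eqI: assumes "subgroup N G" "n \<in> N" "x \<in> carrier G"
  shows "N #> (n \<otimes> x) = N #> x"
proof -
  have n: "n \<in> carrier G" using subgroup.mem_carrier[OF assms(1,2)] .
  have "N #> (n \<otimes> x) = (N #> n) #> x"
    using coset_mult_assoc[OF subgroup.subset[OF assms(1)] n assms(3)] by simp
  thus ?thesis using subgroup.rcos_const[OF assms(1) is_group assms(2)] by simp
qed

definition rep :: "'a set \<Rightarrow> 'a" where "rep A = (SOME a. a \<in> A)"

lemma rep_in: "x \<in> A \<Longrightarrow> rep A \<in> A"
  unfolding rep_def by (rule someI)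

lemma (in group) rep_coset: assumes "subgroup N G" "x \<in> carrier G"
  shows "rep (N #> x) \<in> carrier G" "N #> rep (N #> x) = N #> x"
proof -
  have r: "rep (N #> x) \<in> N #> x" using rep_in[OF rcos_self[OF assms(2,1)]] .
  then obtain n where "n \<in> N" "rep (N #> x) = n \<otimes> x" by (rule coset_obtain)
  thus "rep (N #> x) \<in> carrier G" "N #> rep (N #> x) = N #> x"
    using assms coset_eqI subgroup.mem_carrier[OF assms(1)] by auto
qed

context mla begin

lemma coset_star_l: assumes "mla_ideal N G" "n \<in> N" "a \<in> carrier G" "b \<in> carrier G"
  shows "N #> star G (n \<otimes> a) b = N #> star G a b"
proof -
  have sub: "subgroup N G" using ideal_sub[OF assms(1)] .
  have nc: "n \<in> carrier G" using subgroup.mem_carrier[OF sub assms(2)] .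
  define s where "s = star G a b"
  define m where "m = star G n b"
  have sc: "s \<in> carrier G" and m: "m \<in> N" using assms nc s_def m_def ideal_star_l by auto
  have mc: "m \<in> carrier G" using subgroup.mem_carrier[OF sub m] .
  have e: "star G (n \<otimes> a) b = conjg G n s \<otimes> m" using star_mul_l nc assms s_def m_def by simp
  have "(conjg G n s \<otimes> m) \<otimes> inv s = n \<otimes> conjg G s (inv n \<otimes> m)"
    using nc sc mc by (simp add: conjg_def m_assoc)
  moreover have "conjg G s (inv n \<otimes> m) \<in> N"
    using normal_conjg[OF ideal_normal[OF assms(1)] sc] sub assms(2) m
    by (simp add: subgroup.m_closed subgroup.m_inv_closed)
  ultimately have "(conjg G n s \<otimes> m) \<otimes> inv s \<in> N" using sub assms(2) by (simp add: subgroup.m_closed)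
  thus ?thesis using e coset_eq_iff[OF sub] sc nc mc s_def by simp
qed

lemma coset_star_r: assumes "mla_ideal N G" "n \<in> N" "a \<in> carrier G" "b \<in> carrier G"
  shows "N #> star G a (n \<otimes> b) = N #> star G a b"
proof -
  have sub: "subgroup N G" using ideal_sub[OF assms(1)] .
  have nc: "n \<in> carrier G" using subgroup.mem_carrier[OF sub assms(2)] .
  define s where "s = star G a b"
  define m where "m = star G a n"
  have sc: "s \<in> carrier G" and m: "m \<in> N" using assms nc s_def m_def ideal_star_r by auto
  have mc: "m \<in> carrier G" using subgroup.mem_carrier[OF sub m] .
  have e: "star G a (n \<otimes> b) = m \<otimes> conjg G n s" using star_mul_r nc assms s_def m_def by simp
  have "(m \<otimes> conjg G n s) \<otimes> inv s = m \<otimes> n \<otimes> conjg G s (inv n)"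
    using nc sc mc by (simp add: conjg_def m_assoc)
  moreover have "conjg G s (inv n) \<in> N"
    using normal_conjg[OF ideal_normal[OF assms(1)] sc] sub assms(2)
    by (simp add: subgroup.m_inv_closed)
  ultimately have "(m \<otimes> conjg G n s) \<otimes> inv s \<in> N" using sub assms(2) m by (simp add: subgroup.m_closed)
  thus ?thesis using e coset_eq_iff[OF sub] sc nc mc s_def by simp
qed

lemma coset_star: assumes "mla_ideal N G" "a \<in> carrier G" "b \<in> carrier G" "a' \<in> carrier G" "b' \<in> carrier G"
  "N #> a = N #> a'" "N #> b = N #> b'"
  shows "N #> star G a b = N #> star G a' b'"
proof -
  have sub: "subgroup N G" using ideal_sub[OF assms(1)] .
  have "a \<in> N #> a'" using assms(6) rcos_self[OF assms(2) sub] by simp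
  then obtain n where n: "n \<in> N" "a = n \<otimes> a'" by (rule coset_obtain)
  have "b \<in> N #> b'" using assms(7) rcos_self[OF assms(3) sub] by simp
  then obtain m where m: "m \<in> N" "b = m \<otimes> b'" by (rule coset_obtain)
  have "N #> star G a b = N #> star G a' b" using coset_star_l[OF assms(1) n(1) assms(4,3)] n by simp
  also have "\<dots> = N #> star G a' b'" using coset_star_r[OF assms(1) m(1) assms(4,5)] m by simp
  finally show ?thesis .
qed

lemma mod_star: assumes "mla_ideal N G" "a \<in> carrier G" "b \<in> carrier G"
  shows "star (MLA_Mod G N) (N #> a) (N #> b) = N #> star G a b"
proof -
  have sub: "subgroup N G" using ideal_sub[OF assms(1)] .
  have "star (MLA_Mod G N) (N #> a) (N #> b) = N #> star G (rep (N #> a)) (rep (N #> b))"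
    by (simp add: MLA_Mod_def rep_def)
  also have "\<dots> = N #> star G a b"
    by (rule coset_star[OF assms(1) rep_coset(1)[OF sub assms(2)] rep_coset(1)[OF sub assms(3)] assms(2,3)
       rep_coset(2)[OF sub assms(2)] rep_coset(2)[OF sub assms(3)]])
  finally show ?thesis .
qed

end

definition cl :: "('a, 'b) mla_scheme \<Rightarrow> ('a \<times> 'a) mterm \<Rightarrow> ('a \<times> 'a) mterm set" where
  "cl H t = tens_rel H `` {t}"

lemma tens_rel_equiv: "equiv UNIV (tens_rel H)"
  by (rule equivI) (auto simp: refl_on_def sym_def trans_def intro: tens_rel.intros)

lemma cl_eq_iff: "cl H s = cl H t \<longleftrightarrow> (s, t) \<in> tens_rel H"
  unfolding cl_def using equiv_class_eq_iff[OF tens_rel_equiv] by auto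

lemma cl_eqI: "(s, t) \<in> tens_rel H \<Longrightarrow> cl H s = cl H t"
  by (simp add: cl_eq_iff)

lemma cl_self: "s \<in> cl H s"
  by (simp add: cl_def tens_rel.refl)

lemma cl_mem: "s' \<in> cl H s \<longleftrightarrow> (s, s') \<in> tens_rel H"
  by (simp add: cl_def)

lemma T_carrier: "carrier (tensor_sq H) = {cl H t | t. wf_mterm (carrier H) t}"
  by (simp add: tensor_sq_def cl_def)

lemma T_carrierI: "wf_mterm (carrier H) t \<Longrightarrow> cl H t \<in> carrier (tensor_sq H)"
  by (auto simp: T_carrier)

lemma T_carrierE: assumes "x \<in> carrier (tensor_sq H)"
  obtains t where "wf_mterm (carrier H) t" "x = cl H t"
  using assms by (auto simp: T_carrier)

lemma T_mult: "cl H s \<otimes>\<^bsub>tensor_sq H\<^esub> cl H t = cl H (Mul s t)"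
proof -
  have "\<And>s' t'. s' \<in> cl H s \<Longrightarrow> t' \<in> cl H t \<Longrightarrow> cl H (Mul s' t') = cl H (Mul s t)"
    by (rule cl_eqI, rule tens_rel.sym, rule tens_rel.cong_mul) (auto simp: cl_mem)
  hence "(\<Union>s'\<in>cl H s. \<Union>t'\<in>cl H t. cl H (Mul s' t')) = cl H (Mul s t)"
    using cl_self[of s H] cl_self[of t H] by blast
  thus ?thesis by (simp add: tensor_sq_def cl_def)
qed

lemma T_star: "star (tensor_sq H) (cl H s) (cl H t) = cl H (Star s t)"
proof -
  have "\<And>s' t'. s' \<in> cl H s \<Longrightarrow> t' \<in> cl H t \<Longrightarrow> cl H (Star s' t') = cl H (Star s t)"
    by (rule cl_eqI, rule tens_rel.sym, rule tens_rel.cong_star) (auto simp: cl_mem)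
  hence "(\<Union>s'\<in>cl H s. \<Union>t'\<in>cl H t. cl H (Star s' t')) = cl H (Star s t)"
    using cl_self[of s H] cl_self[of t H] by blast
  thus ?thesis by (simp add: tensor_sq_def cl_def)
qed

lemma T_one: "\<one>\<^bsub>tensor_sq H\<^esub> = cl H One"
  by (simp add: tensor_sq_def cl_def)

lemma T_group: "group (tensor_sq H)"
proof (rule groupI)
  fix x y assume "x \<in> carrier (tensor_sq H)" "y \<in> carrier (tensor_sq H)"
  thus "x \<otimes>\<^bsub>tensor_sq H\<^esub> y \<in> carrier (tensor_sq H)"
    by (auto elim!: T_carrierE simp: T_mult intro!: T_carrierI)
next
  show "\<one>\<^bsub>tensor_sq H\<^esub> \<in> carrier (tensor_sq H)" by (auto simp: T_one intro!: T_carrierI)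
next
  fix x y z assume "x \<in> carrier (tensor_sq H)" "y \<in> carrier (tensor_sq H)" "z \<in> carrier (tensor_sq H)"
  thus "x \<otimes>\<^bsub>tensor_sq H\<^esub> y \<otimes>\<^bsub>tensor_sq H\<^esub> z = x \<otimes>\<^bsub>tensor_sq H\<^esub> (y \<otimes>\<^bsub>tensor_sq H\<^esub> z)"
    by (elim T_carrierE) (simp add: T_mult cl_eq_iff tens_rel.assoc)
next
  fix x assume "x \<in> carrier (tensor_sq H)"
  thus "\<one>\<^bsub>tensor_sq H\<^esub> \<otimes>\<^bsub>tensor_sq H\<^esub> x = x"
    by (elim T_carrierE) (simp add: T_mult T_one cl_eq_iff tens_rel.lunit)
next
  fix x assume "x \<in> carrier (tensor_sq H)"
  then obtain t where t: "wf_mterm (carrier H) t" "x = cl H t" by (rule T_carrierE)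
  show "\<exists>y\<in>carrier (tensor_sq H). y \<otimes>\<^bsub>tensor_sq H\<^esub> x = \<one>\<^bsub>tensor_sq H\<^esub>"
    by (rule bexI[of _ "cl H (Inv t)"]) (auto simp: t T_mult T_one intro!: cl_eqI tens_rel.linv T_carrierI)
qed

lemma T_inv: assumes "wf_mterm (carrier H) t"
  shows "inv\<^bsub>tensor_sq H\<^esub> (cl H t) = cl H (Inv t)"
proof -
  interpret group "tensor_sq H" by (rule T_group)
  show ?thesis
    by (rule inv_equality) (auto simp: assms T_mult T_one intro!: cl_eqI tens_rel.linv T_carrierI)
qed

lemma T_conjg: assumes "wf_mterm (carrier H) y"
  shows "conjg (tensor_sq H) (cl H y) (cl H z) = cl H (cjT y z)"
  by (simp add: conjg_def cjT_def T_mult T_inv assms)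

lemma T_mla: "mla (tensor_sq H)"
proof -
  interpret group "tensor_sq H" by (rule T_group)
  show ?thesis
  proof
    fix x y assume "x \<in> carrier (tensor_sq H)" "y \<in> carrier (tensor_sq H)"
    thus "star (tensor_sq H) x y \<in> carrier (tensor_sq H)"
      by (auto elim!: T_carrierE simp: T_star intro!: T_carrierI)
  next
    fix x assume "x \<in> carrier (tensor_sq H)"
    thus "star (tensor_sq H) x x = \<one>\<^bsub>tensor_sq H\<^esub>"
      by (elim T_carrierE) (simp add: T_star T_one cl_eq_iff tens_rel.star_self)
  next
    fix x y z assume "x \<in> carrier (tensor_sq H)" "y \<in> carrier (tensor_sq H)" "z \<in> carrier (tensor_sq H)"
    thus "star (tensor_sq H) x (y \<otimes>\<^bsub>tensor_sq H\<^esub> z) =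
       star (tensor_sq H) x y \<otimes>\<^bsub>tensor_sq H\<^esub> conjg (tensor_sq H) y (star (tensor_sq H) x z)"
      by (elim T_carrierE) (simp add: T_star T_mult T_conjg cl_eq_iff tens_rel.star_mul_right)
  next
    fix x y z assume "x \<in> carrier (tensor_sq H)" "y \<in> carrier (tensor_sq H)" "z \<in> carrier (tensor_sq H)"
    thus "star (tensor_sq H) (x \<otimes>\<^bsub>tensor_sq H\<^esub> y) z =
       conjg (tensor_sq H) x (star (tensor_sq H) y z) \<otimes>\<^bsub>tensor_sq H\<^esub> star (tensor_sq H) x z"
      by (elim T_carrierE) (simp add: T_star T_mult T_conjg cl_eq_iff tens_rel.star_mul_left)
  qed
qed


context mla begin

lemma subgroup_conjg: "subgroup K G \<Longrightarrow> x \<in> K \<Longrightarrow> y \<in> K \<Longrightarrow> conjg G x y \<in> K"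
  unfolding conjg_def by (intro subgroup.m_closed subgroup.m_inv_closed) auto

lemma gen_star_closed1:
  assumes S: "S \<subseteq> carrier G" and cl: "\<And>a b. a \<in> S \<Longrightarrow> b \<in> S \<Longrightarrow> star G a b \<in> generate G S"
    and a: "a \<in> S" and b: "b \<in> generate G S"
  shows "star G a b \<in> generate G S"
  using b
proof (induction b rule: generate.induct)
  case one
  then show ?case using a S generate.one[of G S] by auto
next
  case (incl h)
  then show ?case using cl a by blast
next
  case (inv h)
  have sg: "subgroup (generate G S) G" using generate_is_subgroup[OF S] .
  have ac: "a \<in> carrier G" and hc: "h \<in> carrier G" using a inv S by auto
  have "star G a (inv h) = conjg G (inv h) (inv (star G a h))" using star_inv_r[OF ac hc] .
  moreover have "inv h \<in> generate G S" using inv by (rule generate.inv)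
  moreover have "inv (star G a h) \<in> generate G S"
    using subgroup.m_inv_closed[OF sg cl[OF a inv]] .
  ultimately show ?case using subgroup_conjg[OF sg] by simp
next
  case (eng h1 h2)
  have sg: "subgroup (generate G S) G" using generate_is_subgroup[OF S] .
  have ac: "a \<in> carrier G" using a S by auto
  have h1: "h1 \<in> carrier G" "h2 \<in> carrier G" using eng generate_in_carrier[OF S] by auto
  have "star G a (h1 \<otimes> h2) = star G a h1 \<otimes> conjg G h1 (star G a h2)" using star_mul_r[OF ac h1] .
  thus ?case using eng subgroup_conjg[OF sg] subgroup.m_closed[OF sg] by simp
qed

lemma gen_star_closed:
  assumes S: "S \<subseteq> carrier G" and cl: "\<And>a b. a \<in> S \<Longrightarrow> b \<in> S \<Longrightarrow> star G a b \<in> generate G S"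
    and a: "a \<in> generate G S" and b: "b \<in> generate G S"
  shows "star G a b \<in> generate G S"
  using a
proof (induction a rule: generate.induct)
  case one
  then show ?case using b S generate.one[of G S] generate_in_carrier[OF S] by auto
next
  case (incl h)
  then show ?case using gen_star_closed1[OF S cl _ b] by blast
next
  case (inv h)
  have sg: "subgroup (generate G S) G" using generate_is_subgroup[OF S] .
  have bc: "b \<in> carrier G" and hc: "h \<in> carrier G" using b inv S generate_in_carrier[OF S] by auto
  have "star G (inv h) b = inv (conjg G (inv h) (star G h b))" using star_inv_l[OF hc bc] .
  moreover have "inv h \<in> generate G S" using inv by (rule generate.inv)
  moreover have "star G h b \<in> generate G S" using gen_star_closed1[OF S cl inv b] .
  ultimately show ?case using subgroup_conjg[OF sg] subgroup.m_inv_closed[OF sg] by simp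
next
  case (eng h1 h2)
  have sg: "subgroup (generate G S) G" using generate_is_subgroup[OF S] .
  have bc: "b \<in> carrier G" using b generate_in_carrier[OF S] by auto
  have h1: "h1 \<in> carrier G" "h2 \<in> carrier G" using eng generate_in_carrier[OF S] by auto
  have "star G (h1 \<otimes> h2) b = conjg G h1 (star G h2 b) \<otimes> star G h1 b" using star_mul_l[OF h1 bc] .
  thus ?case using eng subgroup_conjg[OF sg] subgroup.m_closed[OF sg] by simp
qed

lemma star_into_normal_r:
  assumes H: "H \<lhd> G" and S: "S \<subseteq> carrier G" and a: "a \<in> carrier G"
    and st: "\<And>s. s \<in> S \<Longrightarrow> star G a s \<in> H"
    and b: "b \<in> generate G S"
  shows "star G a b \<in> H"
  using b
proof (induction b rule: generate.induct)
  case one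
  then show ?case using a normal_imp_subgroup[OF H] subgroup.one_closed by fastforce
next
  case (incl h)
  then show ?case using st by blast
next
  case (inv h)
  have sg: "subgroup H G" using normal_imp_subgroup[OF H] .
  have hc: "h \<in> carrier G" using inv S by auto
  have "star G a (inv h) = conjg G (inv h) (inv (star G a h))" using star_inv_r[OF a hc] .
  thus ?case using normal_conjg[OF H] hc st[OF inv] subgroup.m_inv_closed[OF sg] by simp
next
  case (eng h1 h2)
  have sg: "subgroup H G" using normal_imp_subgroup[OF H] .
  have h1: "h1 \<in> carrier G" "h2 \<in> carrier G" using eng generate_in_carrier[OF S] by auto
  have "star G a (h1 \<otimes> h2) = star G a h1 \<otimes> conjg G h1 (star G a h2)" using star_mul_r[OF a h1] .
  thus ?case using eng normal_conjg[OF H] h1 subgroup.m_closed[OF sg] by simp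
qed

lemma star_into_normal_l:
  assumes H: "H \<lhd> G" and S: "S \<subseteq> carrier G" and b: "b \<in> carrier G"
    and st: "\<And>s. s \<in> S \<Longrightarrow> star G s b \<in> H"
    and a: "a \<in> generate G S"
  shows "star G a b \<in> H"
  using a
proof (induction a rule: generate.induct)
  case one
  then show ?case using b normal_imp_subgroup[OF H] subgroup.one_closed by fastforce
next
  case (incl h)
  then show ?case using st by blast
next
  case (inv h)
  have sg: "subgroup H G" using normal_imp_subgroup[OF H] .
  have hc: "h \<in> carrier G" using inv S by auto
  have "star G (inv h) b = inv (conjg G (inv h) (star G h b))" using star_inv_l[OF hc b] .
  thus ?case using normal_conjg[OF H] hc st[OF inv] subgroup.m_inv_closed[OF sg] by simp
next
  case (eng h1 h2)
  have sg: "subgroup H G" using normal_imp_subgroup[OF H] .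
  have h1: "h1 \<in> carrier G" "h2 \<in> carrier G" using eng generate_in_carrier[OF S] by auto
  have "star G (h1 \<otimes> h2) b = conjg G h1 (star G h2 b) \<otimes> star G h1 b" using star_mul_l[OF h1 b] .
  thus ?case using eng normal_conjg[OF H] h1 subgroup.m_closed[OF sg] by simp
qed

end

lemma (in group) normal_set_mult:
  assumes L: "L \<lhd> G" and R: "R \<lhd> G"
  shows "(L <#> R) \<lhd> G"
proof -
  have sL: "subgroup L G" and sR: "subgroup R G" using L R normal_imp_subgroup by auto
  have mem: "z \<in> L <#> R \<longleftrightarrow> (\<exists>l\<in>L. \<exists>r\<in>R. z = l \<otimes> r)" for z
    by (auto simp: set_mult_def)
  have Lc: "\<And>l. l \<in> L \<Longrightarrow> l \<in> carrier G" using subgroup.mem_carrier[OF sL] .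
  have Rc: "\<And>r. r \<in> R \<Longrightarrow> r \<in> carrier G" using subgroup.mem_carrier[OF sR] .
  have sub: "subgroup (L <#> R) G"
  proof (rule subgroup.intro)
    show "L <#> R \<subseteq> carrier G" using mem Lc Rc by auto
  next
    fix x y assume "x \<in> L <#> R" "y \<in> L <#> R"
    then obtain l1 r1 l2 r2 where a: "l1 \<in> L" "r1 \<in> R" "l2 \<in> L" "r2 \<in> R" "x = l1 \<otimes> r1" "y = l2 \<otimes> r2"
      using mem by blast
    have "x \<otimes> y = (l1 \<otimes> (r1 \<otimes> l2 \<otimes> inv r1)) \<otimes> (r1 \<otimes> r2)"
      using a Lc Rc by (simp add: m_assoc inv_cancel_left)
    moreover have "r1 \<otimes> l2 \<otimes> inv r1 \<in> L" using L a Rc normal_inv_iff by blast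
    ultimately show "x \<otimes> y \<in> L <#> R" using mem a subgroup.m_closed[OF sL] subgroup.m_closed[OF sR] by blast
  next
    show "\<one> \<in> L <#> R" using mem subgroup.one_closed[OF sL] subgroup.one_closed[OF sR] by force
  next
    fix x assume "x \<in> L <#> R"
    then obtain l r where a: "l \<in> L" "r \<in> R" "x = l \<otimes> r" using mem by blast
    have "inv x = (inv r \<otimes> inv l \<otimes> inv (inv r)) \<otimes> inv r"
      using a Lc Rc by (simp add: m_assoc inv_mult_group)
    moreover have "inv r \<otimes> inv l \<otimes> inv (inv r) \<in> L"
      using L a Rc normal_inv_iff subgroup.m_inv_closed[OF sL] by blast
    ultimately show "inv x \<in> L <#> R" using mem a subgroup.m_inv_closed[OF sR] by blast
  qed
  show ?thesis unfolding normal_inv_iff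
  proof (intro conjI sub ballI)
    fix g h assume g: "g \<in> carrier G" and "h \<in> L <#> R"
    then obtain l r where a: "l \<in> L" "r \<in> R" "h = l \<otimes> r" using mem by blast
    have "g \<otimes> h \<otimes> inv g = (g \<otimes> l \<otimes> inv g) \<otimes> (g \<otimes> r \<otimes> inv g)"
      using a Lc Rc g by (simp add: m_assoc inv_cancel_left)
    moreover have "g \<otimes> l \<otimes> inv g \<in> L" using L a g normal_inv_iff by blast
    moreover have "g \<otimes> r \<otimes> inv g \<in> R" using R a g normal_inv_iff by blast
    ultimately show "g \<otimes> h \<otimes> inv g \<in> L <#> R" using mem by blast
  qed
qed


lemma (in group) left_cancel [simp]:
  "\<lbrakk>x \<in> carrier G; y \<in> carrier G; z \<in> carrier G\<rbrakk> \<Longrightarrow> (x \<otimes> y = x \<otimes> z) = (y = z)"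
  by (metis inv_cancel_left)

lemma tens_cl: "tens G x y = cl G (Gen (x, y))"
  by (simp add: tens_def cl_def)

locale tsetup = mla G for G :: "('a, 'b) mla_scheme" (structure) +
  fixes I :: "'a set"
  assumes idl: "mla_ideal I G"

sublocale tsetup \<subseteq> T: mla "tensor_sq G" by (rule T_mla)

context tsetup begin

abbreviation "T \<equiv> tensor_sq G"

lemma I_sub: "subgroup I G" using ideal_sub[OF idl] .
lemma I_normal: "I \<lhd> G" using ideal_normal[OF idl] .
lemma I_carrier: "a \<in> I \<Longrightarrow> a \<in> carrier G" using subgroup.mem_carrier[OF I_sub] .

lemma tens_carrier [simp, intro]: "x \<in> carrier G \<Longrightarrow> y \<in> carrier G \<Longrightarrow> tens G x y \<in> carrier T"
  by (simp add: tens_cl T_carrierI)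

lemma rel1_eq: "\<lbrakk>x \<in> carrier G; y \<in> carrier G; y' \<in> carrier G\<rbrakk> \<Longrightarrow>
   tens G x (y \<otimes> y') = tens G x y \<otimes>\<^bsub>T\<^esub> tens G (conjg G y x) (conjg G y y')"
  by (simp add: tens_cl T_mult cl_eq_iff tens_rel.rel1)

lemma rel2_eq: "\<lbrakk>x \<in> carrier G; x' \<in> carrier G; y \<in> carrier G\<rbrakk> \<Longrightarrow>
   tens G (x \<otimes> x') y = tens G (conjg G x x') (conjg G x y) \<otimes>\<^bsub>T\<^esub> tens G x y"
  by (simp add: tens_cl T_mult cl_eq_iff tens_rel.rel2)

lemma rel5_eq: "\<lbrakk>x \<in> carrier G; y \<in> carrier G; x' \<in> carrier G; y' \<in> carrier G\<rbrakk> \<Longrightarrow>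
   star T (tens G x y) (tens G x' y') = tens G (inv (star G y x)) (star G x' y')"
  by (simp add: tens_cl T_star cl_eq_iff tens_rel.rel5)

definition "Gens = {tens G x y | x y. x \<in> carrier G \<and> y \<in> carrier G}"

lemma tens_Gens: "x \<in> carrier G \<Longrightarrow> y \<in> carrier G \<Longrightarrow> tens G x y \<in> Gens"
  unfolding Gens_def by blast

lemma Gens_sub: "Gens \<subseteq> carrier T"
  by (auto simp: Gens_def)

lemma T_gen: "carrier T \<subseteq> generate T Gens"
proof
  fix c assume "c \<in> carrier T"
  then obtain t where t: "wf_mterm (carrier G) t" "c = cl G t" by (rule T_carrierE)
  have "wf_mterm (carrier G) t \<Longrightarrow> cl G t \<in> generate T Gens"
  proof (induction t)
    case (Gen p)
    then obtain x y where "p = (x, y)" "x \<in> carrier G" "y \<in> carrier G" by (cases p) auto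
    then show ?case by (auto simp: Gens_def tens_cl intro!: generate.incl)
  next
    case One
    then show ?case using generate.one[of T Gens] by (simp add: T_one)
  next
    case (Mul s t)
    then show ?case by (auto simp: T_mult[symmetric] intro!: generate.eng)
  next
    case (Inv s)
    then show ?case using T.generate_m_inv_closed[OF Gens_sub] by (simp add: T_inv[symmetric])
  next
    case (Star s t)
    have "\<And>a b. a \<in> Gens \<Longrightarrow> b \<in> Gens \<Longrightarrow> star T a b \<in> generate T Gens"
    proof -
      fix a b assume "a \<in> Gens" "b \<in> Gens"
      then obtain x y x' y' where "x \<in> carrier G" "y \<in> carrier G" "x' \<in> carrier G" "y' \<in> carrier G"
        "a = tens G x y" "b = tens G x' y'" unfolding Gens_def by blast
      thus "star T a b \<in> generate T Gens" by (simp add: rel5_eq generate.incl tens_Gens)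
    qed
    then show ?case using Star T.gen_star_closed[OF Gens_sub] by (simp add: T_star[symmetric])
  qed
  thus "c \<in> generate T Gens" using t by simp
qed

lemma conj_tens:
  assumes x: "x \<in> carrier G" and y: "y \<in> carrier G" and x': "x' \<in> carrier G" and y': "y' \<in> carrier G"
  shows "tens G x y \<otimes>\<^bsub>T\<^esub> tens G (conjg G (y \<otimes> x) x') (conjg G (y \<otimes> x) y')
     = tens G (conjg G (x \<otimes> y) x') (conjg G (x \<otimes> y) y') \<otimes>\<^bsub>T\<^esub> tens G x y"
proof -
  define P1 where "P1 = tens G (conjg G x x') (conjg G x y)"
  define Q1 where "Q1 = tens G (conjg G (x \<otimes> y) x') (conjg G (x \<otimes> y) y')"
  define Q2 where "Q2 = tens G (conjg G (y \<otimes> x) x') (conjg G (y \<otimes> x) y')"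
  define C where "C = tens G x y"
  define D where "D = tens G (conjg G y x) (conjg G y y')"
  have cs: "P1 \<in> carrier T" "Q1 \<in> carrier T" "Q2 \<in> carrier T" "C \<in> carrier T" "D \<in> carrier T"
    using assms by (auto simp: P1_def Q1_def Q2_def C_def D_def)
  have "tens G (x \<otimes> x') (y \<otimes> y') = tens G (conjg G x x') (conjg G x y \<otimes> conjg G x y') \<otimes>\<^bsub>T\<^esub> tens G x (y \<otimes> y')"
    using rel2_eq[of x x' "y \<otimes> y'"] assms by (simp add: conjg_mult)
  also have "\<dots> = (P1 \<otimes>\<^bsub>T\<^esub> Q1) \<otimes>\<^bsub>T\<^esub> (C \<otimes>\<^bsub>T\<^esub> D)"
    using rel1_eq[of "conjg G x x'" "conjg G x y" "conjg G x y'"] rel1_eq[of x y y'] assms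
    by (simp add: P1_def Q1_def C_def D_def conjg_conjg)
  finally have A: "tens G (x \<otimes> x') (y \<otimes> y') = (P1 \<otimes>\<^bsub>T\<^esub> Q1) \<otimes>\<^bsub>T\<^esub> (C \<otimes>\<^bsub>T\<^esub> D)" .
  have "tens G (x \<otimes> x') (y \<otimes> y') = tens G (x \<otimes> x') y \<otimes>\<^bsub>T\<^esub> tens G (conjg G y x \<otimes> conjg G y x') (conjg G y y')"
    using rel1_eq[of "x \<otimes> x'" y y'] assms by (simp add: conjg_mult)
  also have "\<dots> = (P1 \<otimes>\<^bsub>T\<^esub> C) \<otimes>\<^bsub>T\<^esub> (Q2 \<otimes>\<^bsub>T\<^esub> D)"
    using rel2_eq[of x x' y] rel2_eq[of "conjg G y x" "conjg G y x'" "conjg G y y'"] assms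
    by (simp add: P1_def Q2_def C_def D_def conjg_conjg)
  finally have B: "tens G (x \<otimes> x') (y \<otimes> y') = (P1 \<otimes>\<^bsub>T\<^esub> C) \<otimes>\<^bsub>T\<^esub> (Q2 \<otimes>\<^bsub>T\<^esub> D)" .
  have "P1 \<otimes>\<^bsub>T\<^esub> ((Q1 \<otimes>\<^bsub>T\<^esub> C) \<otimes>\<^bsub>T\<^esub> D) = P1 \<otimes>\<^bsub>T\<^esub> ((C \<otimes>\<^bsub>T\<^esub> Q2) \<otimes>\<^bsub>T\<^esub> D)"
    using A B cs by (simp add: T.m_assoc)
  hence "Q1 \<otimes>\<^bsub>T\<^esub> C = C \<otimes>\<^bsub>T\<^esub> Q2" using cs by simp
  thus ?thesis by (simp add: Q1_def Q2_def C_def)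
qed

end

lemma (in group) conj_from_comm1: "x \<otimes> y = z \<otimes> x \<Longrightarrow> x \<in> carrier G \<Longrightarrow> y \<in> carrier G \<Longrightarrow> z \<in> carrier G
  \<Longrightarrow> x \<otimes> y \<otimes> inv x = z"
  by (simp add: m_assoc)

lemma (in group) conj_from_comm2: "x \<otimes> z = y \<otimes> x \<Longrightarrow> x \<in> carrier G \<Longrightarrow> y \<in> carrier G \<Longrightarrow> z \<in> carrier G
  \<Longrightarrow> inv x \<otimes> y \<otimes> inv (inv x) = z"
  by (metis inv_cancel_left inv_closed inv_inv m_assoc m_closed)

context tsetup begin

lemma gen_normal:
  assumes Pc: "\<And>a b. P a b \<Longrightarrow> a \<in> carrier G \<and> b \<in> carrier G"
    and Pconj: "\<And>a b g. P a b \<Longrightarrow> g \<in> carrier G \<Longrightarrow> P (conjg G g a) (conjg G g b)"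
  shows "generate T {tens G a b | a b. P a b} \<lhd> T"
proof -
  define S where "S = {tens G a b | a b. P a b}"
  have Ssub: "S \<subseteq> carrier T" using Pc by (auto simp: S_def)
  have main: "\<forall>h\<in>S. g \<otimes>\<^bsub>T\<^esub> h \<otimes>\<^bsub>T\<^esub> inv\<^bsub>T\<^esub> g \<in> S" if g: "g \<in> generate T Gens" for g
    using g
  proof (induction g rule: generate.induct)
    case one
    then show ?case using Ssub by auto
  next
    case (incl g)
    then obtain x y where xy: "x \<in> carrier G" "y \<in> carrier G" "g = tens G x y" unfolding Gens_def by blast
    show ?case
    proof
      fix h assume "h \<in> S"
      then obtain a b where ab: "P a b" "h = tens G a b" unfolding S_def by blast
      have ac: "a \<in> carrier G" "b \<in> carrier G" using Pc ab by auto
      define c where "c = y \<otimes> x"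
      define d where "d = x \<otimes> y"
      have cd: "c \<in> carrier G" "d \<in> carrier G" using xy c_def d_def by auto
      define a' where "a' = conjg G (inv c) a"
      define b' where "b' = conjg G (inv c) b"
      have a'c: "a' \<in> carrier G" "b' \<in> carrier G" using cd ac a'_def b'_def by auto
      have e: "conjg G c a' = a" "conjg G c b' = b" using cd ac a'_def b'_def by auto
      have "g \<otimes>\<^bsub>T\<^esub> h = tens G (conjg G d a') (conjg G d b') \<otimes>\<^bsub>T\<^esub> g"
        using conj_tens[OF xy(1,2) a'c] xy ab e c_def d_def by simp
      hence "g \<otimes>\<^bsub>T\<^esub> h \<otimes>\<^bsub>T\<^esub> inv\<^bsub>T\<^esub> g = tens G (conjg G d a') (conjg G d b')"
        using xy ab ac cd a'c by (intro T.conj_from_comm1) auto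
      moreover have "P (conjg G d a') (conjg G d b')"
        unfolding a'_def b'_def using Pconj[OF Pconj[OF ab(1)]] cd by auto
      ultimately show "g \<otimes>\<^bsub>T\<^esub> h \<otimes>\<^bsub>T\<^esub> inv\<^bsub>T\<^esub> g \<in> S" unfolding S_def by blast
    qed
  next
    case (inv g)
    then obtain x y where xy: "x \<in> carrier G" "y \<in> carrier G" "g = tens G x y" unfolding Gens_def by blast
    show ?case
    proof
      fix h assume "h \<in> S"
      then obtain a b where ab: "P a b" "h = tens G a b" unfolding S_def by blast
      have ac: "a \<in> carrier G" "b \<in> carrier G" using Pc ab by auto
      define c where "c = y \<otimes> x"
      define d where "d = x \<otimes> y"
      have cd: "c \<in> carrier G" "d \<in> carrier G" using xy c_def d_def by auto
      define a' where "a' = conjg G (inv d) a"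
      define b' where "b' = conjg G (inv d) b"
      have a'c: "a' \<in> carrier G" "b' \<in> carrier G" using cd ac a'_def b'_def by auto
      have e: "conjg G d a' = a" "conjg G d b' = b" using cd ac a'_def b'_def by auto
      have "g \<otimes>\<^bsub>T\<^esub> tens G (conjg G c a') (conjg G c b') = h \<otimes>\<^bsub>T\<^esub> g"
        using conj_tens[OF xy(1,2) a'c] xy ab e c_def d_def by simp
      hence "inv\<^bsub>T\<^esub> g \<otimes>\<^bsub>T\<^esub> h \<otimes>\<^bsub>T\<^esub> inv\<^bsub>T\<^esub> (inv\<^bsub>T\<^esub> g) = tens G (conjg G c a') (conjg G c b')"
        using xy ab ac cd a'c by (intro T.conj_from_comm2) auto
      moreover have "P (conjg G c a') (conjg G c b')"
        unfolding a'_def b'_def using Pconj[OF Pconj[OF ab(1)]] cd by auto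
      ultimately show "inv\<^bsub>T\<^esub> g \<otimes>\<^bsub>T\<^esub> h \<otimes>\<^bsub>T\<^esub> inv\<^bsub>T\<^esub> (inv\<^bsub>T\<^esub> g) \<in> S" unfolding S_def by blast
    qed
  next
    case (eng g1 g2)
    have gc: "g1 \<in> carrier T" "g2 \<in> carrier T"
      using eng T.generate_in_carrier[OF Gens_sub] by auto
    show ?case
    proof
      fix h assume h: "h \<in> S"
      have hc: "h \<in> carrier T" using h Ssub by auto
      have "g1 \<otimes>\<^bsub>T\<^esub> g2 \<otimes>\<^bsub>T\<^esub> h \<otimes>\<^bsub>T\<^esub> inv\<^bsub>T\<^esub> (g1 \<otimes>\<^bsub>T\<^esub> g2)
        = g1 \<otimes>\<^bsub>T\<^esub> (g2 \<otimes>\<^bsub>T\<^esub> h \<otimes>\<^bsub>T\<^esub> inv\<^bsub>T\<^esub> g2) \<otimes>\<^bsub>T\<^esub> inv\<^bsub>T\<^esub> g1"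
        using gc hc by (simp add: T.m_assoc T.inv_mult_group)
      moreover have "g2 \<otimes>\<^bsub>T\<^esub> h \<otimes>\<^bsub>T\<^esub> inv\<^bsub>T\<^esub> g2 \<in> S" using eng.IH(2) h by blast
      ultimately show "g1 \<otimes>\<^bsub>T\<^esub> g2 \<otimes>\<^bsub>T\<^esub> h \<otimes>\<^bsub>T\<^esub> inv\<^bsub>T\<^esub> (g1 \<otimes>\<^bsub>T\<^esub> g2) \<in> S"
        using eng.IH(1) by simp
    qed
  qed
  have "generate T S \<lhd> T"
    by (rule T.normal_generateI[OF Ssub]) (use main T_gen in blast)
  thus ?thesis by (simp add: S_def)
qed

end

context tsetup begin

abbreviation "N \<equiv> left_tens I G <#>\<^bsub>T\<^esub> right_tens G I"

lemma L_normal: "left_tens I G \<lhd> T"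
  unfolding left_tens_def
  by (rule gen_normal[where P = "\<lambda>a b. a \<in> I \<and> b \<in> carrier G", simplified])
     (auto simp: I_carrier normal_conjg[OF I_normal])

lemma R_normal: "right_tens G I \<lhd> T"
  unfolding right_tens_def
  by (rule gen_normal[where P = "\<lambda>a b. a \<in> carrier G \<and> b \<in> I", simplified])
     (auto simp: I_carrier normal_conjg[OF I_normal])

lemma N_normal: "N \<lhd> T"
  by (rule T.normal_set_mult[OF L_normal R_normal])

lemma N_sub: "subgroup N T" using normal_imp_subgroup[OF N_normal] .

lemma L_N: "l \<in> left_tens I G \<Longrightarrow> l \<in> N"
proof -
  assume l: "l \<in> left_tens I G"
  have "l \<in> carrier T" using subgroup.mem_carrier[OF normal_imp_subgroup[OF L_normal] l] .
  hence "l = l \<otimes>\<^bsub>T\<^esub> \<one>\<^bsub>T\<^esub>" by simp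
  thus "l \<in> N" using l subgroup.one_closed[OF normal_imp_subgroup[OF R_normal]]
    unfolding set_mult_def by blast
qed

lemma R_N: "r \<in> right_tens G I \<Longrightarrow> r \<in> N"
proof -
  assume r: "r \<in> right_tens G I"
  have "r \<in> carrier T" using subgroup.mem_carrier[OF normal_imp_subgroup[OF R_normal] r] .
  hence "r = \<one>\<^bsub>T\<^esub> \<otimes>\<^bsub>T\<^esub> r" by simp
  thus "r \<in> N" using r subgroup.one_closed[OF normal_imp_subgroup[OF L_normal]]
    unfolding set_mult_def by blast
qed

lemma SL_N: "a \<in> I \<Longrightarrow> b \<in> carrier G \<Longrightarrow> tens G a b \<in> N"
  by (rule L_N) (auto simp: left_tens_def intro!: generate.incl)

lemma SR_N: "a \<in> carrier G \<Longrightarrow> b \<in> I \<Longrightarrow> tens G a b \<in> N"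
  by (rule R_N) (auto simp: right_tens_def intro!: generate.incl)

lemma star_gen_N:
  assumes c: "c \<in> carrier T" and ab: "a \<in> carrier G" "b \<in> carrier G" and ib: "a \<in> I \<or> b \<in> I"
  shows "star T c (tens G a b) \<in> N"
proof -
  have "c \<in> generate T Gens" using c T_gen by blast
  moreover have "\<And>g. g \<in> Gens \<Longrightarrow> star T g (tens G a b) \<in> N"
  proof -
    fix g assume "g \<in> Gens"
    then obtain x y where xy: "x \<in> carrier G" "y \<in> carrier G" "g = tens G x y" unfolding Gens_def by blast
    have e: "star T g (tens G a b) = tens G (inv (star G y x)) (star G a b)"
      using xy ab rel5_eq by simp
    show "star T g (tens G a b) \<in> N"
    proof (cases "a \<in> I")
      case True
      then show ?thesis using e SR_N ideal_star_l[OF idl ab(2) True] xy by simp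
    next
      case False
      then have "b \<in> I" using ib by blast
      then show ?thesis using e SR_N ideal_star_r[OF idl ab(1)] xy ab by simp
    qed
  qed
  ultimately show ?thesis
    using T.star_into_normal_l[OF N_normal Gens_sub tens_carrier[OF ab]] by blast
qed

lemma N_ideal: "mla_ideal N T"
  unfolding mla_ideal_def
proof (intro conjI N_normal ballI)
  fix c n assume c: "c \<in> carrier T" and n: "n \<in> N"
  have SLsub: "{tens G a b | a b. a \<in> I \<and> b \<in> carrier G} \<subseteq> carrier T" using I_carrier by auto
  have SRsub: "{tens G a b | a b. a \<in> carrier G \<and> b \<in> I} \<subseteq> carrier T" using I_carrier by auto
  have l: "star T c l \<in> N" if "l \<in> left_tens I G" for l
    using T.star_into_normal_r[OF N_normal SLsub c _ that[unfolded left_tens_def]]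
      star_gen_N[OF c] I_carrier by blast
  have r: "star T c r \<in> N" if "r \<in> right_tens G I" for r
    using T.star_into_normal_r[OF N_normal SRsub c _ that[unfolded right_tens_def]]
      star_gen_N[OF c] I_carrier by blast
  obtain l r where lr: "l \<in> left_tens I G" "r \<in> right_tens G I" "n = l \<otimes>\<^bsub>T\<^esub> r"
    using n unfolding set_mult_def by blast
  have lc: "l \<in> carrier T" using subgroup.mem_carrier[OF normal_imp_subgroup[OF L_normal] lr(1)] .
  have rc: "r \<in> carrier T" using subgroup.mem_carrier[OF normal_imp_subgroup[OF R_normal] lr(2)] .
  have "star T c n = star T c l \<otimes>\<^bsub>T\<^esub> conjg T l (star T c r)"
    using T.star_mul_r[OF c lc rc] lr by simp
  moreover have "conjg T l (star T c r) \<in> N"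
    using T.normal_conjg[OF N_normal lc r[OF lr(2)]] .
  ultimately show "star T c n \<in> N"
    using l[OF lr(1)] subgroup.m_closed[OF N_sub] by simp
qed

end

fun clean :: "'a set \<Rightarrow> ('a \<times> 'a) mterm \<Rightarrow> ('a \<times> 'a) mterm" where
  "clean A (Gen (x, y)) = (if x \<in> A \<and> y \<in> A then Gen (x, y) else One)"
| "clean A One = One"
| "clean A (Mul s t) = Mul (clean A s) (clean A t)"
| "clean A (Inv s) = Inv (clean A s)"
| "clean A (Star s t) = Star (clean A s) (clean A t)"

lemma clean_wf [simp]: "wf_mterm A (clean A t)"
  by (induction t rule: clean.induct) auto

lemma clean_id: "wf_mterm A t \<Longrightarrow> clean A t = t"
  by (induction t rule: clean.induct) auto

lemma clean_cjT [simp]: "clean A (cjT s t) = cjT (clean A s) (clean A t)"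
  by (simp add: cjT_def)

lemma map_cjT [simp]: "map_mterm f (cjT s t) = cjT (map_mterm f s) (map_mterm f t)"
  by (simp add: cjT_def)

context tsetup begin

abbreviation "Q \<equiv> MLA_Mod G I"
abbreviation "cs x \<equiv> I #> x"

lemma Q_carrier: "carrier Q = rcosets I"
  by (simp add: MLA_Mod_def)

lemma cs_Q [simp, intro]: "x \<in> carrier G \<Longrightarrow> cs x \<in> carrier Q"
  by (simp add: Q_carrier rcosetsI subgroup.subset[OF I_sub])

lemma Q_carrierE: assumes "A \<in> carrier Q" obtains x where "x \<in> carrier G" "A = cs x"
  using assms by (auto simp: Q_carrier RCOSETS_def)

lemma Q_mult: "x \<in> carrier G \<Longrightarrow> y \<in> carrier G \<Longrightarrow> cs x \<otimes>\<^bsub>Q\<^esub> cs y = cs (x \<otimes> y)"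
  by (simp add: MLA_Mod_def normal.rcos_sum[OF I_normal])

lemma Q_one: "\<one>\<^bsub>Q\<^esub> = cs \<one>"
  by (simp add: MLA_Mod_def subgroup.subset[OF I_sub])

lemma cs_I: "a \<in> I \<Longrightarrow> cs a = cs \<one>"
  using subgroup.rcos_const[OF I_sub is_group] subgroup.subset[OF I_sub] by simp

lemma Q_inv: assumes "x \<in> carrier G" shows "inv\<^bsub>Q\<^esub> (cs x) = cs (inv x)"
proof -
  have "inv\<^bsub>Q\<^esub> (cs x) = inv\<^bsub>G Mod I\<^esub> (cs x)"
    by (simp add: m_inv_def MLA_Mod_def FactGroup_def)
  also have "\<dots> = set_inv (cs x)"
    using normal.inv_FactGroup[OF I_normal] assms
    by (simp add: FactGroup_def rcosetsI subgroup.subset[OF I_sub])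
  also have "\<dots> = cs (inv x)" using normal.rcos_inv[OF I_normal assms] .
  finally show ?thesis .
qed

lemma Q_conjg: "x \<in> carrier G \<Longrightarrow> y \<in> carrier G \<Longrightarrow> conjg Q (cs y) (cs x) = cs (conjg G y x)"
  by (simp add: conjg_def Q_mult Q_inv)

lemma Q_star: "x \<in> carrier G \<Longrightarrow> y \<in> carrier G \<Longrightarrow> star Q (cs x) (cs y) = cs (star G x y)"
  using mod_star[OF idl] .

lemma rep_cs: "x \<in> carrier G \<Longrightarrow> rep (cs x) \<in> carrier G"
  using rep_coset(1)[OF I_sub] .
lemma cs_rep: "x \<in> carrier G \<Longrightarrow> cs (rep (cs x)) = cs x"
  using rep_coset(2)[OF I_sub] .

lemma cs_decomp: assumes "a \<in> carrier G" "a' \<in> carrier G" "cs a = cs a'"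
  obtains j where "j \<in> I" "a = a' \<otimes> j"
proof -
  have "a \<otimes> inv a' \<in> I" using coset_eq_iff[OF I_sub assms(1,2)] assms(3) by simp
  hence "conjg G (inv a') (a \<otimes> inv a') \<in> I" using normal_conjg[OF I_normal] assms by simp
  moreover have "conjg G (inv a') (a \<otimes> inv a') = inv a' \<otimes> a"
    using assms by (simp add: conjg_def m_assoc)
  moreover have "a = a' \<otimes> (inv a' \<otimes> a)" using assms by (simp add: inv_cancel_left2)
  ultimately show ?thesis using that by simp
qed

lemma (in group) coset_right_normal: assumes "N \<lhd> G" "n \<in> N" "t \<in> carrier G"
  shows "N #> (t \<otimes> n) = N #> t"
proof -
  have sub: "subgroup N G" using normal_imp_subgroup[OF assms(1)] .
  have nc: "n \<in> carrier G" using subgroup.mem_carrier[OF sub assms(2)] .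
  have "(t \<otimes> n) \<otimes> inv t \<in> N" using assms nc normal_inv_iff by blast
  thus ?thesis using coset_eq_iff[OF sub] assms nc by simp
qed

lemma tens_indep:
  assumes c: "a \<in> carrier G" "a' \<in> carrier G" "b \<in> carrier G" "b' \<in> carrier G"
    and e: "cs a = cs a'" "cs b = cs b'"
  shows "N #>\<^bsub>T\<^esub> tens G a b = N #>\<^bsub>T\<^esub> tens G a' b'"
proof -
  obtain j where j: "j \<in> I" "a = a' \<otimes> j" using cs_decomp[OF c(1,2) e(1)] .
  obtain k where k: "k \<in> I" "b = b' \<otimes> k" using cs_decomp[OF c(3,4) e(2)] .
  have jc: "j \<in> carrier G" and kc: "k \<in> carrier G" using j k I_carrier by auto
  have "tens G a b = tens G (conjg G a' j) (conjg G a' b) \<otimes>\<^bsub>T\<^esub> tens G a' b"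
    using rel2_eq[OF c(2) jc c(3)] j by simp
  moreover have "tens G (conjg G a' j) (conjg G a' b) \<in> N"
    using SL_N normal_conjg[OF I_normal c(2) j(1)] c jc by simp
  ultimately have 1: "N #>\<^bsub>T\<^esub> tens G a b = N #>\<^bsub>T\<^esub> tens G a' b"
    using T.coset_eqI[OF N_sub] c by simp
  have "tens G a' b = tens G a' b' \<otimes>\<^bsub>T\<^esub> tens G (conjg G b' a') (conjg G b' k)"
    using rel1_eq[OF c(2) c(4) kc] k by simp
  moreover have "tens G (conjg G b' a') (conjg G b' k) \<in> N"
    using SR_N normal_conjg[OF I_normal c(4) k(1)] c kc by simp
  ultimately have 2: "N #>\<^bsub>T\<^esub> tens G a' b = N #>\<^bsub>T\<^esub> tens G a' b'"
    using T.coset_right_normal[OF N_normal] c by simp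
  show ?thesis using 1 2 by simp
qed

definition lift :: "('a set \<times> 'a set) mterm \<Rightarrow> ('a \<times> 'a) mterm" where
  "lift = map_mterm (\<lambda>(A, B). (rep A, rep B))"

definition gg :: "('a set \<times> 'a set) mterm \<Rightarrow> ('a \<times> 'a) mterm set" where
  "gg s = cl G (clean (carrier G) (lift s))"

definition ff :: "('a set \<times> 'a set) mterm \<Rightarrow> ('a \<times> 'a) mterm set set" where
  "ff s = N #>\<^bsub>T\<^esub> gg s"

lemma gg_carrier [simp, intro]: "gg s \<in> carrier T"
  by (simp add: gg_def T_carrierI)

lemma gg_Mul: "gg (Mul s t) = gg s \<otimes>\<^bsub>T\<^esub> gg t"
  by (simp add: gg_def lift_def T_mult)

lemma gg_Inv: "gg (Inv s) = inv\<^bsub>T\<^esub> gg s"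
  by (simp add: gg_def lift_def T_inv)

lemma gg_Star: "gg (Star s t) = star T (gg s) (gg t)"
  by (simp add: gg_def lift_def T_star)

lemma gg_One: "gg One = \<one>\<^bsub>T\<^esub>"
  by (simp add: gg_def lift_def T_one)

lemma ff_Mul: "ff (Mul s t) = ff s <#>\<^bsub>T\<^esub> ff t"
  unfolding ff_def gg_Mul by (rule normal.rcos_sum[OF N_normal, symmetric]) auto

lemma ff_Inv: "ff (Inv s) = set_inv\<^bsub>T\<^esub> (ff s)"
  unfolding ff_def gg_Inv by (rule normal.rcos_inv[OF N_normal, symmetric]) auto

lemma ff_Star: "ff (Star s t) = star (MLA_Mod T N) (ff s) (ff t)"
  unfolding ff_def gg_Star by (rule T.mod_star[OF N_ideal, symmetric]) auto

lemma ff_One: "ff One = N"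
  unfolding ff_def gg_One by (rule T.coset_mult_one[OF subgroup.subset[OF N_sub]])

lemma ff_Gen: assumes "a \<in> carrier G" "b \<in> carrier G"
  shows "ff (Gen (cs a, cs b)) = N #>\<^bsub>T\<^esub> tens G a b"
proof -
  have "ff (Gen (cs a, cs b)) = N #>\<^bsub>T\<^esub> tens G (rep (cs a)) (rep (cs b))"
    using assms by (simp add: ff_def gg_def lift_def rep_cs tens_cl)
  also have "\<dots> = N #>\<^bsub>T\<^esub> tens G a b"
    by (rule tens_indep) (simp_all add: assms rep_cs cs_rep)
  finally show ?thesis .
qed


lemma rel3_eq: "\<lbrakk>x \<in> carrier G; x' \<in> carrier G; y \<in> carrier G\<rbrakk> \<Longrightarrow>
  tens G (star G x x') (conjg G x' y) \<otimes>\<^bsub>T\<^esub> inv\<^bsub>T\<^esub> (tens G (conjg G y x) (star G x' y))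
   \<otimes>\<^bsub>T\<^esub> inv\<^bsub>T\<^esub> (tens G (conjg G x x') (inv (star G x y))) = \<one>\<^bsub>T\<^esub>"
  by (simp add: tens_cl T_inv T_mult T_one cl_eq_iff tens_rel.rel3)

lemma rel4_eq: "\<lbrakk>x \<in> carrier G; y \<in> carrier G; y' \<in> carrier G\<rbrakk> \<Longrightarrow>
  tens G (conjg G y' x) (star G y y') \<otimes>\<^bsub>T\<^esub> inv\<^bsub>T\<^esub> (tens G (inv (star G y x)) (conjg G y y'))
   \<otimes>\<^bsub>T\<^esub> inv\<^bsub>T\<^esub> (tens G (star G y' x) (conjg G x y)) = \<one>\<^bsub>T\<^esub>"
  by (simp add: tens_cl T_inv T_mult T_one cl_eq_iff tens_rel.rel4)

lemma ff_gg: "gg s = gg t \<Longrightarrow> ff s = ff t"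
  by (simp add: ff_def)

lemma gg_eqI: "(clean (carrier G) (lift s), clean (carrier G) (lift t)) \<in> tens_rel G \<Longrightarrow> gg s = gg t"
  by (simp add: gg_def cl_eq_iff)

lemmas ffsimps = ff_Mul ff_Inv ff_Star ff_One ff_Gen Q_mult Q_conjg Q_inv Q_star
  normal.rcos_sum[OF N_normal] normal.rcos_inv[OF N_normal] T.mod_star[OF N_ideal]
  rel1_eq rel2_eq rel5_eq

lemma ff_resp: "(s, t) \<in> tens_rel Q \<Longrightarrow> ff s = ff t"
proof (induction rule: tens_rel.induct)
  case (cong_mul s s' t t') then show ?case by (simp add: ff_Mul)
next
  case (cong_inv s s') then show ?case by (simp add: ff_Inv)
next
  case (cong_star s s' t t') then show ?case by (simp add: ff_Star)
next
  case (assoc s t u) show ?case by (intro ff_gg gg_eqI) (simp add: lift_def tens_rel.assoc)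
next
  case (lunit s) show ?case by (intro ff_gg gg_eqI) (simp add: lift_def tens_rel.lunit)
next
  case (runit s) show ?case by (intro ff_gg gg_eqI) (simp add: lift_def tens_rel.runit)
next
  case (linv s) show ?case by (intro ff_gg gg_eqI) (simp add: lift_def tens_rel.linv)
next
  case (star_self s) show ?case by (intro ff_gg gg_eqI) (simp add: lift_def tens_rel.star_self)
next
  case (star_mul_right x y z) show ?case by (intro ff_gg gg_eqI) (simp add: lift_def tens_rel.star_mul_right)
next
  case (star_mul_left x y z) show ?case by (intro ff_gg gg_eqI) (simp add: lift_def tens_rel.star_mul_left)
next
  case (jacobi x y z) show ?case by (intro ff_gg gg_eqI) (simp add: lift_def tens_rel.jacobi)
next
  case (star_conj z x y) show ?case by (intro ff_gg gg_eqI) (simp add: lift_def tens_rel.star_conj)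
next
  case (rel1 A B C)
  then obtain x y z where "x \<in> carrier G" "y \<in> carrier G" "z \<in> carrier G" "A = cs x" "B = cs y" "C = cs z"
    by (metis Q_carrierE)
  then show ?case by (simp add: ffsimps)
next
  case (rel2 A B C)
  then obtain x y z where "x \<in> carrier G" "y \<in> carrier G" "z \<in> carrier G" "A = cs x" "B = cs y" "C = cs z"
    by (metis Q_carrierE)
  then show ?case by (simp add: ffsimps)
next
  case (rel3 A B C)
  then obtain x y z where "x \<in> carrier G" "y \<in> carrier G" "z \<in> carrier G" "A = cs x" "B = cs y" "C = cs z"
    by (metis Q_carrierE)
  then show ?case by (simp add: ffsimps rel3_eq subgroup.subset[OF N_sub])
next
  case (rel4 A B C)
  then obtain x y z where "x \<in> carrier G" "y \<in> carrier G" "z \<in> carrier G" "A = cs x" "B = cs y" "C = cs z"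
    by (metis Q_carrierE)
  then show ?case by (simp add: ffsimps rel4_eq subgroup.subset[OF N_sub])
next
  case (rel5 A B C D)
  then obtain x y z w where "x \<in> carrier G" "y \<in> carrier G" "z \<in> carrier G" "w \<in> carrier G"
    "A = cs x" "B = cs y" "C = cs z" "D = cs w"
    by (metis Q_carrierE)
  then show ?case by (simp add: ffsimps)
qed simp_all

end

context tsetup begin

abbreviation "T' \<equiv> tensor_sq Q"

definition proj :: "('a \<times> 'a) mterm \<Rightarrow> ('a set \<times> 'a set) mterm" where
  "proj = map_mterm (\<lambda>(a, b). (cs a, cs b))"

lemma proj_rel: "(u, v) \<in> tens_rel G \<Longrightarrow>
  (proj (clean (carrier G) u), proj (clean (carrier G) v)) \<in> tens_rel Q"
proof (induction rule: tens_rel.induct)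
  case (refl s) then show ?case by (rule tens_rel.refl)
next
  case (sym s t) show ?case by (rule tens_rel.sym[OF sym.IH])
next
  case (trans s t u) show ?case by (rule tens_rel.trans[OF trans.IH])
next
  case (cong_mul s s' t t') then show ?case by (simp add: proj_def tens_rel.cong_mul)
next
  case (cong_inv s s') then show ?case by (simp add: proj_def tens_rel.cong_inv)
next
  case (cong_star s s' t t') then show ?case by (simp add: proj_def tens_rel.cong_star)
next
  case (assoc s t u) show ?case by (simp add: proj_def tens_rel.assoc)
next
  case (lunit s) show ?case by (simp add: proj_def tens_rel.lunit)
next
  case (runit s) show ?case by (simp add: proj_def tens_rel.runit)
next
  case (linv s) show ?case by (simp add: proj_def tens_rel.linv)
next
  case (star_self s) show ?case by (simp add: proj_def tens_rel.star_self)
next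
  case (star_mul_right x y z) show ?case by (simp add: proj_def tens_rel.star_mul_right)
next
  case (star_mul_left x y z) show ?case by (simp add: proj_def tens_rel.star_mul_left)
next
  case (jacobi x y z) show ?case by (simp add: proj_def tens_rel.jacobi)
next
  case (star_conj z x y) show ?case by (simp add: proj_def tens_rel.star_conj)
next
  case (rel1 x y y')
  then show ?case using tens_rel.rel1[of "cs x" Q "cs y" "cs y'"]
    by (simp add: proj_def Q_mult Q_conjg)
next
  case (rel2 x x' y)
  then show ?case using tens_rel.rel2[of "cs x" Q "cs x'" "cs y"]
    by (simp add: proj_def Q_mult Q_conjg)
next
  case (rel3 x x' y)
  then show ?case using tens_rel.rel3[of "cs x" Q "cs x'" "cs y"]
    by (simp add: proj_def Q_mult Q_conjg Q_star Q_inv)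
next
  case (rel4 x y y')
  then show ?case using tens_rel.rel4[of "cs x" Q "cs y" "cs y'"]
    by (simp add: proj_def Q_mult Q_conjg Q_star Q_inv)
next
  case (rel5 x y x' y')
  then show ?case using tens_rel.rel5[of "cs x" Q "cs y" "cs x'" "cs y'"]
    by (simp add: proj_def Q_mult Q_conjg Q_star Q_inv)
qed

definition pp :: "('a \<times> 'a) mterm \<Rightarrow> ('a set \<times> 'a set) mterm set" where
  "pp u = cl Q (proj (clean (carrier G) u))"

definition PP :: "('a \<times> 'a) mterm set \<Rightarrow> ('a set \<times> 'a set) mterm set" where
  "PP c = pp (SOME u. u \<in> c)"

lemma PP_cl: "PP (cl G u) = pp u"
proof -
  have "(SOME v. v \<in> cl G u) \<in> cl G u" by (rule someI, rule cl_self)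
  hence "(u, SOME v. v \<in> cl G u) \<in> tens_rel G" by (simp add: cl_mem)
  hence "pp (SOME v. v \<in> cl G u) = pp u"
    unfolding pp_def by (rule cl_eqI[OF tens_rel.sym[OF proj_rel]])
  thus ?thesis by (simp add: PP_def)
qed

lemma wf_proj: "wf_mterm (carrier G) u \<Longrightarrow> wf_mterm (carrier Q) (proj u)"
proof (induction u)
  case (Gen p) then show ?case by (cases p) (auto simp: proj_def)
qed (auto simp: proj_def)

lemma PP_hom: "PP \<in> hom T T'"
proof (rule homI)
  fix c assume "c \<in> carrier T"
  then obtain u where u: "wf_mterm (carrier G) u" "c = cl G u" by (rule T_carrierE)
  show "PP c \<in> carrier T'" using u by (simp add: PP_cl pp_def T_carrierI wf_proj)
next
  fix c d assume "c \<in> carrier T" "d \<in> carrier T"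
  then obtain u v where u: "wf_mterm (carrier G) u" "c = cl G u" "wf_mterm (carrier G) v" "d = cl G v"
    by (auto elim!: T_carrierE)
  show "PP (c \<otimes>\<^bsub>T\<^esub> d) = PP c \<otimes>\<^bsub>T'\<^esub> PP d"
    using u by (simp add: T_mult PP_cl pp_def proj_def)
qed

lemma PP_group_hom: "group_hom T T' PP"
  by (simp add: group_hom_def group_hom_axioms_def T_group PP_hom)

lemma idem_T': "e \<in> carrier T' \<Longrightarrow> e = e \<otimes>\<^bsub>T'\<^esub> e \<Longrightarrow> e = \<one>\<^bsub>T'\<^esub>"
  using group.idem_one[OF T_group] by blast

lemma Gen_one_l: assumes "y \<in> carrier G" shows "cl Q (Gen (cs \<one>, cs y)) = \<one>\<^bsub>T'\<^esub>"
proof -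
  have "(Gen (cs \<one> \<otimes>\<^bsub>Q\<^esub> cs \<one>, cs y), Mul (Gen (conjg Q (cs \<one>) (cs \<one>), conjg Q (cs \<one>) (cs y))) (Gen (cs \<one>, cs y)))
     \<in> tens_rel Q"
    using assms by (intro tens_rel.rel2) auto
  hence "cl Q (Gen (cs \<one>, cs y)) = cl Q (Gen (cs \<one>, cs y)) \<otimes>\<^bsub>T'\<^esub> cl Q (Gen (cs \<one>, cs y))"
    using assms by (simp add: Q_mult Q_conjg T_mult cl_eq_iff)
  thus ?thesis using assms by (intro idem_T') (auto intro!: T_carrierI)
qed

lemma Gen_one_r: assumes "x \<in> carrier G" shows "cl Q (Gen (cs x, cs \<one>)) = \<one>\<^bsub>T'\<^esub>"
proof -
  have "(Gen (cs x, cs \<one> \<otimes>\<^bsub>Q\<^esub> cs \<one>), Mul (Gen (cs x, cs \<one>)) (Gen (conjg Q (cs \<one>) (cs x), conjg Q (cs \<one>) (cs \<one>))))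
     \<in> tens_rel Q"
    using assms by (intro tens_rel.rel1) auto
  hence "cl Q (Gen (cs x, cs \<one>)) = cl Q (Gen (cs x, cs \<one>)) \<otimes>\<^bsub>T'\<^esub> cl Q (Gen (cs x, cs \<one>))"
    using assms by (simp add: Q_mult Q_conjg T_mult cl_eq_iff)
  thus ?thesis using assms by (intro idem_T') (auto intro!: T_carrierI)
qed

lemma PP_tens: "a \<in> carrier G \<Longrightarrow> b \<in> carrier G \<Longrightarrow> PP (tens G a b) = cl Q (Gen (cs a, cs b))"
  by (simp add: tens_cl PP_cl pp_def proj_def)

lemma PP_N: assumes "n \<in> N" shows "PP n = \<one>\<^bsub>T'\<^esub>"
proof -
  interpret gh: group_hom T T' PP by (rule PP_group_hom)
  have ksub: "subgroup (kernel T T' PP) T" by (rule gh.subgroup_kernel)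
  have L: "left_tens I G \<subseteq> kernel T T' PP"
    unfolding left_tens_def
    by (rule T.generate_subgroup_incl[OF _ ksub])
       (auto simp: kernel_def PP_tens cs_I Gen_one_l I_carrier)
  have R: "right_tens G I \<subseteq> kernel T T' PP"
    unfolding right_tens_def
    by (rule T.generate_subgroup_incl[OF _ ksub])
       (auto simp: kernel_def PP_tens cs_I Gen_one_r I_carrier)
  obtain l r where lr: "l \<in> left_tens I G" "r \<in> right_tens G I" "n = l \<otimes>\<^bsub>T\<^esub> r"
    using assms unfolding set_mult_def by blast
  have "l \<in> kernel T T' PP" "r \<in> kernel T T' PP" using L R lr by auto
  thus ?thesis using lr by (simp add: kernel_def)
qed

lemma proj_lift: "wf_mterm (carrier Q) s \<Longrightarrow> proj (clean (carrier G) (lift s)) = s"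
proof (induction s)
  case (Gen p)
  then obtain A B where p: "p = (A, B)" "A \<in> carrier Q" "B \<in> carrier Q" by (cases p) auto
  then obtain a b where "a \<in> carrier G" "b \<in> carrier G" "A = cs a" "B = cs b" by (metis Q_carrierE)
  then show ?case using p by (simp add: lift_def proj_def rep_cs cs_rep)
qed (auto simp: lift_def proj_def)

lemma PP_gg: "wf_mterm (carrier Q) s \<Longrightarrow> PP (gg s) = cl Q s"
  by (simp add: gg_def PP_cl pp_def clean_id proj_lift)

lemma ff_proj: "wf_mterm (carrier G) u \<Longrightarrow> ff (proj u) = N #>\<^bsub>T\<^esub> cl G u"
proof (induction u)
  case (Gen p)
  then obtain x y where p: "p = (x, y)" "x \<in> carrier G" "y \<in> carrier G" by (cases p) auto
  then show ?case by (simp add: proj_def ff_Gen tens_cl)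
next
  case One
  then show ?case by (simp add: proj_def ff_One T_one[symmetric] subgroup.subset[OF N_sub])
next
  case (Mul s t)
  have "ff (proj (Mul s t)) = ff (proj s) <#>\<^bsub>T\<^esub> ff (proj t)"
    by (simp add: proj_def ff_Mul)
  also have "\<dots> = (N #>\<^bsub>T\<^esub> cl G s) <#>\<^bsub>T\<^esub> (N #>\<^bsub>T\<^esub> cl G t)" using Mul by simp
  also have "\<dots> = N #>\<^bsub>T\<^esub> cl G (Mul s t)"
    using Mul by (simp add: normal.rcos_sum[OF N_normal] T_carrierI T_mult)
  finally show ?case .
next
  case (Inv s)
  have "ff (proj (Inv s)) = set_inv\<^bsub>T\<^esub> ff (proj s)"
    by (simp add: proj_def ff_Inv)
  also have "\<dots> = set_inv\<^bsub>T\<^esub> (N #>\<^bsub>T\<^esub> cl G s)" using Inv by simp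
  also have "\<dots> = N #>\<^bsub>T\<^esub> cl G (Inv s)"
    using Inv by (simp add: normal.rcos_inv[OF N_normal] T_carrierI T_inv)
  finally show ?case .
next
  case (Star s t)
  have "ff (proj (Star s t)) = star (MLA_Mod T N) (ff (proj s)) (ff (proj t))"
    by (simp add: proj_def ff_Star)
  also have "\<dots> = star (MLA_Mod T N) (N #>\<^bsub>T\<^esub> cl G s) (N #>\<^bsub>T\<^esub> cl G t)" using Star by simp
  also have "\<dots> = N #>\<^bsub>T\<^esub> cl G (Star s t)"
    using Star by (simp add: T.mod_star[OF N_ideal] T_carrierI T_star)
  finally show ?case .
qed

lemma mod_mult: "monoid.mult (MLA_Mod H K) = set_mult H"
  by (simp add: MLA_Mod_def)

definition hh :: "('a set \<times> 'a set) mterm set \<Rightarrow> ('a \<times> 'a) mterm set set" where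
  "hh P = ff (SOME t. t \<in> P)"

lemma hh_cl: "hh (cl Q t) = ff t"
proof -
  have "(SOME v. v \<in> cl Q t) \<in> cl Q t" by (rule someI, rule cl_self)
  hence "(t, SOME v. v \<in> cl Q t) \<in> tens_rel Q" by (simp add: cl_mem)
  hence "ff t = ff (SOME v. v \<in> cl Q t)" by (rule ff_resp)
  thus ?thesis by (simp add: hh_def)
qed

lemma ff_carrier: "ff t \<in> carrier (MLA_Mod T N)"
  by (simp add: MLA_Mod_def ff_def T.rcosetsI subgroup.subset[OF N_sub])

lemma hh_hom: "hh \<in> hom T' (MLA_Mod T N)"
proof (rule homI)
  fix c assume "c \<in> carrier T'"
  then obtain t where t: "wf_mterm (carrier Q) t" "c = cl Q t" by (rule T_carrierE)
  show "hh c \<in> carrier (MLA_Mod T N)" using t by (simp add: hh_cl ff_carrier)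
next
  fix c d assume "c \<in> carrier T'" "d \<in> carrier T'"
  then obtain u v where u: "c = cl Q u" "d = cl Q v"
    by (auto elim!: T_carrierE)
  show "hh (c \<otimes>\<^bsub>T'\<^esub> d) = hh c \<otimes>\<^bsub>MLA_Mod T N\<^esub> hh d"
    using u by (simp add: T_mult hh_cl ff_Mul mod_mult)
qed

lemma hh_star: "c \<in> carrier T' \<Longrightarrow> d \<in> carrier T' \<Longrightarrow>
   hh (star T' c d) = star (MLA_Mod T N) (hh c) (hh d)"
  by (auto elim!: T_carrierE simp: T_star hh_cl ff_Star)

lemma hh_inj: "inj_on hh (carrier T')"
proof (rule inj_onI)
  fix c d assume "c \<in> carrier T'" "d \<in> carrier T'" and e: "hh c = hh d"
  then obtain s t where st: "wf_mterm (carrier Q) s" "c = cl Q s" "wf_mterm (carrier Q) t" "d = cl Q t"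
    by (auto elim!: T_carrierE)
  interpret gh: group_hom T T' PP by (rule PP_group_hom)
  have "ff s = ff t" using e st by (simp add: hh_cl)
  hence "N #>\<^bsub>T\<^esub> gg s = N #>\<^bsub>T\<^esub> gg t" by (simp add: ff_def)
  hence "gg s \<otimes>\<^bsub>T\<^esub> inv\<^bsub>T\<^esub> gg t \<in> N" using T.coset_eq_iff[OF N_sub] by simp
  hence "PP (gg s \<otimes>\<^bsub>T\<^esub> inv\<^bsub>T\<^esub> gg t) = \<one>\<^bsub>T'\<^esub>" by (rule PP_N)
  hence "PP (gg s) \<otimes>\<^bsub>T'\<^esub> inv\<^bsub>T'\<^esub> PP (gg t) = \<one>\<^bsub>T'\<^esub>" by simp
  hence "PP (gg s) = PP (gg t)"
    using gh.H.inv_equality[of "PP (gg s)" "inv\<^bsub>T'\<^esub> PP (gg t)"] by simp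
  thus "c = d" using st by (simp add: PP_gg)
qed

lemma hh_surj: "hh ` carrier T' = carrier (MLA_Mod T N)"
proof
  show "hh ` carrier T' \<subseteq> carrier (MLA_Mod T N)" using hh_hom by (auto simp: hom_def)
next
  show "carrier (MLA_Mod T N) \<subseteq> hh ` carrier T'"
  proof
    fix A assume "A \<in> carrier (MLA_Mod T N)"
    then obtain c where c: "c \<in> carrier T" "A = N #>\<^bsub>T\<^esub> c" by (auto simp: MLA_Mod_def RCOSETS_def)
    then obtain u where u: "wf_mterm (carrier G) u" "c = cl G u" by (auto elim!: T_carrierE)
    have "hh (cl Q (proj u)) = A" using u c by (simp add: hh_cl ff_proj)
    moreover have "cl Q (proj u) \<in> carrier T'" using u by (simp add: T_carrierI wf_proj)
    ultimately show "A \<in> hh ` carrier T'" by blast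
  qed
qed

lemma main_iso: "mla_is_iso T' (MLA_Mod T N)"
proof -
  have "hh \<in> mla_iso T' (MLA_Mod T N)"
    unfolding mla_iso_def mla_hom_def bij_betw_def
    using hh_hom hh_star hh_inj hh_surj by blast
  thus ?thesis unfolding mla_is_iso_def by blast
qed

end

theorem lemma3p2:
  fixes G :: "('a, 'b) mla_scheme" and I :: "'a set"
  assumes "mult_lie_alg G" and "mla_ideal I G"
  shows "mla_ideal (left_tens I G <#>\<^bsub>tensor_sq G\<^esub> right_tens G I) (tensor_sq G)
    \<and> mla_is_iso (tensor_sq (MLA_Mod G I))
         (MLA_Mod (tensor_sq G) (left_tens I G <#>\<^bsub>tensor_sq G\<^esub> right_tens G I))"
proof -
  interpret tsetup G I
    by (intro tsetup.intro tsetup_axioms.intro mult_lie_alg_mla assms)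
  show ?thesis using N_ideal main_iso by simp
qed

end
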